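(* Let $H$ be a real symmetric positive definite $d\times d$ matrix and $L$ a real $d\times d$ matrix with $L^TH+HL=0$. Consider an $s$-stage explicit Runge–Kutta method applied to $\frac{d}{dt}u=Lu$, $u_{n+1}=G_s u_n$ with $G_s=\sum_{k=0}^s a_k(hL)^k$, $a_0=1$, $a_s\ne0$, $h>0$. Suppose (i) $b_k=0$ for $1\le k\le s-2$, (ii) $b_{s-1}<0$, and (iii) $h\|L\|\le\sqrt{-b_{s-1}/b_s}$. Then the method is strongly stable, i.e. $\|u_{n+1}\|_H\le\|u_n\|_H$ for every $u_n$.
   Context: For $0\le k\le s$, $b_k=\sum_{i=\max(0,2k-s)}^{\min(2k,s)}(-1)^{k+i}a_i a_{2k-i}$ (in particular $b_s=a_s^2$). Here $\|x\|_H=\sqrt{\langle x,Hx\rangle}$ and $\|L\|=\sup_{\|v\|_H=1}\|Lv\|_H$. *)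

theory Defs
  imports "HOL-Analysis.Analysis"
begin

fun matpow :: "real^'n^'n \<Rightarrow> nat \<Rightarrow> real^'n^'n" where
  "matpow A 0 = mat 1"
| "matpow A (Suc k) = A ** matpow A k"

definition Hnorm :: "real^'n^'n \<Rightarrow> real^'n \<Rightarrow> real" where
  "Hnorm H x = sqrt (x \<bullet> (H *v x))"

definition Hopnorm :: "real^'n^'n \<Rightarrow> real^'n^'n \<Rightarrow> real" where
  "Hopnorm H L = Sup {Hnorm H (L *v v) | v. Hnorm H v = 1}"

definition spd :: "real^'n^'n \<Rightarrow> bool" where
  "spd H \<longleftrightarrow> transpose H = H \<and> (\<forall>x. x \<noteq> 0 \<longrightarrow> x \<bullet> (H *v x) > 0)"

definition RKmat :: "(nat \<Rightarrow> real) \<Rightarrow> nat \<Rightarrow> real \<Rightarrow> real^'n^'n \<Rightarrow> real^'n^'n" where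
  "RKmat a s h L = (\<Sum>k=0..s. a k *\<^sub>R matpow (h *\<^sub>R L) k)"

text \<open>b_k = sum_{i=max(0,2k-s)}^{min(2k,s)} (-1)^(k+i) a_i a_(2k-i); nat subtraction 2k-s
  realises max(0,2k-s).\<close>
definition bcoef :: "(nat \<Rightarrow> real) \<Rightarrow> nat \<Rightarrow> nat \<Rightarrow> real" where
  "bcoef a s k = (\<Sum>i=2*k-s..min (2*k) s. (-1)^(k+i) * a i * a (2*k-i))"

end

theory Submission
  imports Defs
begin

lemma comb:
  fixes a N :: "nat \<Rightarrow> real" and p :: "nat \<Rightarrow> nat \<Rightarrow> real"
  assumes p: "\<And>i j. p i j = (if even (i+j) then (-1)^(i + (i+j) div 2) * N ((i+j) div 2) else 0)"
  shows "(\<Sum>i=0..s. \<Sum>j=0..s. a i * a j * p i j) = (\<Sum>k=0..s. bcoef a s k * N k)"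
proof -
  define g where "g = (\<lambda>x. a (fst x) * a (snd x) * p (fst x) (snd x))"
  define S where "S = {0..s} \<times> {0..s}"
  have "(\<Sum>i=0..s. \<Sum>j=0..s. a i * a j * p i j) = (\<Sum>x\<in>S. g x)"
    unfolding S_def g_def by (simp add: sum.cartesian_product split_def)
  also have "\<dots> = (\<Sum>k\<in>{0..s}. \<Sum>x\<in>{x\<in>S. (fst x + snd x) div 2 = k}. g x)"
    by (rule sum.group[symmetric]) (auto simp: S_def)
  also have "\<dots> = (\<Sum>k=0..s. bcoef a s k * N k)"
  proof (rule sum.cong[OF refl])
    fix k assume k: "k \<in> {0..s}"
    have "(\<Sum>x\<in>{x\<in>S. (fst x + snd x) div 2 = k}. g x) = (\<Sum>x\<in>{x\<in>S. fst x + snd x = 2*k}. g x)"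
      by (rule sum.mono_neutral_right) (auto simp: S_def g_def p)
    also have "{x\<in>S. fst x + snd x = 2*k} = (\<lambda>i. (i, 2*k-i)) ` {2*k-s..min (2*k) s}"
      by (auto simp: S_def image_iff) 
    also have "(\<Sum>x\<in>(\<lambda>i. (i, 2*k-i)) ` {2*k-s..min (2*k) s}. g x) = (\<Sum>i=2*k-s..min (2*k) s. g (i, 2*k-i))"
      by (rule sum.reindex_cong[where l="\<lambda>i. (i, 2*k-i)"]) (auto simp: inj_on_def)
    also have "\<dots> = (\<Sum>i=2*k-s..min (2*k) s. (-1)^(k+i) * a i * a (2*k-i) * N k)"
      by (rule sum.cong[OF refl]) (auto simp: g_def p add.commute)
    also have "\<dots> = bcoef a s k * N k"
      unfolding bcoef_def by (simp add: sum_distrib_right)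
    finally show "(\<Sum>x\<in>{x\<in>S. (fst x + snd x) div 2 = k}. g x) = bcoef a s k * N k" .
  qed
  finally show ?thesis .
qed

lemma sum_mv: "finite A \<Longrightarrow> (\<Sum>k\<in>A. f k) *v (u::real^'n) = (\<Sum>k\<in>A. f k *v u)"
  by (induct rule: finite_induct) (auto simp: matrix_vector_mult_add_rdistrib)

lemma ip_sym:
  fixes H :: "real^'n^'n"
  assumes "transpose H = H"
  shows "x \<bullet> (H *v y) = y \<bullet> (H *v x)"
  by (metis assms dot_lmul_matrix inner_commute transpose_matrix_vector)

lemma neg_mv: "(- A) *v (y::real^'n) = - (A *v y)"
  by (simp add: vec_eq_iff matrix_vector_mult_def sum_negf)

lemma ip_skew:
  fixes H M :: "real^'n^'n"
  assumes "transpose H = H" "transpose M ** H + H ** M = 0"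
  shows "(M *v x) \<bullet> (H *v y) = - (x \<bullet> (H *v (M *v y)))"
proof -
  have e: "transpose M ** H = - (H ** M)" using assms(2) by (simp add: eq_neg_iff_add_eq_0)
  have "(M *v x) \<bullet> (H *v y) = (H *v y) \<bullet> (M *v x)" by (simp add: inner_commute)
  also have "\<dots> = (transpose M *v (H *v y)) \<bullet> x"
    by (metis dot_lmul_matrix transpose_matrix_vector)
  also have "\<dots> = - ((H *v (M *v y)) \<bullet> x)"
    by (simp add: matrix_vector_mul_assoc e neg_mv)
  finally show ?thesis by (simp add: inner_commute)
qed

lemma ip_lin_right:
  fixes H :: "real^'n^'n"
  shows "x \<bullet> (H *v (\<Sum>j\<in>A. c j *\<^sub>R v j)) = (\<Sum>j\<in>A. c j * (x \<bullet> (H *v v j)))"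
  by (simp add: vec.sum matrix_vector_mult_scaleR inner_sum_right)

lemma spd_nonneg: "spd H \<Longrightarrow> 0 \<le> x \<bullet> (H *v x)"
  unfolding spd_def by (cases "x = 0") (auto intro: less_imp_le)

lemma Hnorm_scale: "Hnorm H (c *\<^sub>R x) = \<bar>c\<bar> * Hnorm H x"
  by (simp add: Hnorm_def matrix_vector_mult_scaleR real_sqrt_mult mult.assoc[symmetric] flip: power2_eq_square)

lemma spd_lower:
  fixes H :: "real^'n^'n"
  assumes "spd H"
  shows "\<exists>m>0. \<forall>x. m * (norm x)^2 \<le> x \<bullet> (H *v x)"
proof -
  have c: "continuous_on (sphere 0 1) (\<lambda>x::real^'n. x \<bullet> (H *v x))"
    by (intro continuous_intros matrix_vector_mult_linear_continuous_on[THEN continuous_on_compose2[of UNIV]]) auto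
  have ne: "sphere (0::real^'n) 1 \<noteq> {}"
    by (simp add: sphere_eq_empty)
  obtain x0 where x0: "x0 \<in> sphere 0 1" "\<forall>y\<in>sphere 0 1. x0 \<bullet> (H *v x0) \<le> y \<bullet> (H *v y)"
    using continuous_attains_inf[OF compact_sphere ne c] by blast
  define m where "m = x0 \<bullet> (H *v x0)"
  have "x0 \<noteq> 0" using x0 by auto
  hence mpos: "m > 0" using assms unfolding spd_def m_def by auto
  have "m * (norm x)^2 \<le> x \<bullet> (H *v x)" for x
  proof (cases "x = 0")
    case True then show ?thesis by simp
  next
    case False
    define y where "y = (1 / norm x) *\<^sub>R x"
    have "y \<in> sphere 0 1" using False by (simp add: y_def)
    hence "m \<le> y \<bullet> (H *v y)" using x0 m_def by auto
    also have "y \<bullet> (H *v y) = (x \<bullet> (H *v x)) / (norm x)^2"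
      by (simp add: y_def matrix_vector_mult_scaleR power2_eq_square)
    finally show ?thesis using False by (simp add: field_simps)
  qed
  thus ?thesis using mpos by blast
qed

lemma Hop:
  fixes H L :: "real^'n^'n"
  assumes "spd H"
  shows "Hnorm H (L *v w) \<le> Hopnorm H L * Hnorm H w" "0 \<le> Hopnorm H L"
proof -
  obtain m where m: "m > 0" "\<And>x. m * (norm x)^2 \<le> x \<bullet> (H *v x)" using spd_lower[OF assms] by blast
  obtain BH where BH: "\<And>x. norm (H *v x) \<le> norm x * BH" "BH > 0"
    using bounded_linear.pos_bounded[OF matrix_vector_mul_bounded_linear] by blast
  obtain BL where BL: "\<And>x. norm (L *v x) \<le> norm x * BL" "BL > 0"
    using bounded_linear.pos_bounded[OF matrix_vector_mul_bounded_linear] by blast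
  let ?S = "{Hnorm H (L *v v) | v. Hnorm H v = 1}"
  have bdd: "bdd_above ?S"
  proof (rule bdd_aboveI)
    fix r assume "r \<in> ?S"
    then obtain v where v: "r = Hnorm H (L *v v)" "Hnorm H v = 1" by blast
    have v1: "v \<bullet> (H *v v) = 1" using v(2) spd_nonneg[OF assms, of v] by (simp add: Hnorm_def)
    have nv: "(norm v)^2 \<le> 1 / m" using m(2)[of v] m(1) v1 by (simp add: field_simps)
    have "(L *v v) \<bullet> (H *v (L *v v)) \<le> norm (L *v v) * norm (H *v (L *v v))"
      by (rule norm_cauchy_schwarz)
    also have "\<dots> \<le> norm (L *v v) * (norm (L *v v) * BH)"
      by (intro mult_left_mono BH) auto
    also have "\<dots> = (norm (L *v v))^2 * BH" by (simp add: power2_eq_square)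
    also have "\<dots> \<le> (norm v * BL)^2 * BH"
      using BL(1)[of v] BH(2) by (intro mult_right_mono power_mono) auto
    also have "\<dots> = (norm v)^2 * (BL^2 * BH)" by (simp add: power_mult_distrib)
    also have "\<dots> \<le> (1/m) * (BL^2 * BH)"
      using nv BH(2) by (intro mult_right_mono) auto
    finally show "r \<le> sqrt ((1/m) * (BL^2 * BH))" unfolding v(1) Hnorm_def
      by (rule real_sqrt_le_mono)
  qed
  obtain e :: "real^'n" where e: "e \<noteq> 0" using vec_eq_iff[of "vec 1 :: real^'n" 0] by auto
  have ep: "Hnorm H e > 0" using assms e unfolding spd_def Hnorm_def by auto
  have "Hnorm H ((1 / Hnorm H e) *\<^sub>R e) = 1" using ep by (simp add: Hnorm_scale)
  hence "Hnorm H (L *v ((1 / Hnorm H e) *\<^sub>R e)) \<in> ?S" by blast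
  hence "Hnorm H (L *v ((1 / Hnorm H e) *\<^sub>R e)) \<le> Hopnorm H L"
    unfolding Hopnorm_def by (rule cSup_upper[OF _ bdd])
  moreover have "0 \<le> Hnorm H (L *v ((1 / Hnorm H e) *\<^sub>R e))"
    unfolding Hnorm_def using spd_nonneg[OF assms] by simp
  ultimately show P: "0 \<le> Hopnorm H L" by linarith
  show "Hnorm H (L *v w) \<le> Hopnorm H L * Hnorm H w"
  proof (cases "w = 0")
    case True then show ?thesis by (simp add: Hnorm_def)
  next
    case False
    have wp: "Hnorm H w > 0" using assms False unfolding spd_def Hnorm_def by auto
    have "Hnorm H ((1 / Hnorm H w) *\<^sub>R w) = 1" using wp by (simp add: Hnorm_scale)
    hence "Hnorm H (L *v ((1 / Hnorm H w) *\<^sub>R w)) \<in> ?S" by blast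
    hence "Hnorm H (L *v ((1 / Hnorm H w) *\<^sub>R w)) \<le> Hopnorm H L"
      unfolding Hopnorm_def by (rule cSup_upper[OF _ bdd])
    hence "Hnorm H (L *v w) / Hnorm H w \<le> Hopnorm H L"
      using wp by (simp add: matrix_vector_mult_scaleR Hnorm_scale)
    thus ?thesis using wp by (simp add: field_simps)
  qed
qed

theorem lemma1:
  fixes H L :: "real^'n^'n" and a :: "nat \<Rightarrow> real" and s :: nat and h :: real
  assumes "spd H"
    and "transpose L ** H + H ** L = 0"
    and "s \<ge> 1"
    and "a 0 = 1" and "a s \<noteq> 0" and "h > 0"
    and "\<forall>k. 1 \<le> k \<and> k \<le> s - 2 \<longrightarrow> bcoef a s k = 0"
    and "bcoef a s (s - 1) < 0"
    and "h * Hopnorm H L \<le> sqrt (- bcoef a s (s - 1) / bcoef a s s)"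
  shows "\<forall>u. Hnorm H (RKmat a s h L *v u) \<le> Hnorm H u"
proof
  fix u :: "real^'n"
  have Hs: "transpose H = H" using assms(1) by (simp add: spd_def)
  define M where "M = h *\<^sub>R L"
  define ip where "ip = (\<lambda>x y::real^'n. x \<bullet> (H *v y))"
  have sym: "ip x y = ip y x" for x y unfolding ip_def by (rule ip_sym[OF Hs])
  have skewL: "ip (L *v x) y = - ip x (L *v y)" for x y
    unfolding ip_def by (rule ip_skew[OF Hs assms(2)])
  have skew: "ip (M *v x) y = - ip x (M *v y)" for x y
    using skewL[of x y] unfolding M_def ip_def
    by (simp flip: scaleR_matrix_vector_assoc add: matrix_vector_mult_scaleR)
  define v where "v k = matpow M k *v u" for k
  have v0: "v 0 = u" by (simp add: v_def)
  have vS: "v (Suc k) = M *v v k" for k by (simp add: v_def matrix_vector_mul_assoc)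
  define N where "N k = ip (v k) (v k)" for k
  have P1: "ip (v i) (v j) = (-1)^i * ip u (v (i+j))" for i j
  proof (induction i arbitrary: j)
    case 0 then show ?case by (simp add: v0)
  next
    case (Suc i)
    have "ip (v (Suc i)) (v j) = - ip (v i) (v (Suc j))" by (simp add: vS skew)
    also have "\<dots> = - ((-1)^i * ip u (v (i + Suc j)))" by (simp add: Suc.IH)
    finally show ?case by simp
  qed
  have P2: "ip u (v n) = 0" if "odd n" for n
  proof -
    have "ip (v n) (v 0) = (-1)^n * ip u (v n)" using P1[of n 0] by simp
    hence "ip u (v n) = - ip u (v n)" using that by (simp add: v0 sym)
    thus ?thesis by simp
  qed
  have P3: "ip u (v (2*k)) = (-1)^k * N k" for k
  proof -
    have "N k = (-1)^k * ip u (v (2*k))" using P1[of k k] by (simp add: N_def mult_2)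
    hence "(-1)^k * N k = ((-1)^k * (-1)^k) * ip u (v (2*k))" by simp
    also have "(-1::real)^k * (-1)^k = 1" by (simp flip: power_add)
    finally show ?thesis by simp
  qed
  have p: "ip (v i) (v j) = (if even (i+j) then (-1)^(i + (i+j) div 2) * N ((i+j) div 2) else 0)" for i j
  proof (cases "even (i+j)")
    case True
    then obtain k where k: "i + j = 2*k" by blast
    show ?thesis using True by (simp add: P1 k P3 power_add)
  next
    case False then show ?thesis by (simp add: P1 P2)
  qed
  have G: "RKmat a s h L *v u = (\<Sum>k=0..s. a k *\<^sub>R v k)"
    unfolding RKmat_def by (simp add: sum_mv v_def M_def scaleR_matrix_vector_assoc)
  have "ip (RKmat a s h L *v u) (RKmat a s h L *v u) = (\<Sum>i=0..s. \<Sum>j=0..s. a i * a j * ip (v i) (v j))"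
    unfolding G ip_def
    apply (simp add: ip_lin_right inner_sum_left sum_distrib_left mult.assoc)
    apply (intro sum.cong refl)
    apply (subst ip_sym[OF Hs])
    apply (rule refl)
    done
  also have "\<dots> = (\<Sum>k=0..s. bcoef a s k * N k)"
    by (rule comb) (rule p)
  finally have E: "ip (RKmat a s h L *v u) (RKmat a s h L *v u) = (\<Sum>k=0..s. bcoef a s k * N k)" .
  have b0: "bcoef a s 0 = 1" by (simp add: bcoef_def assms(4))
  have bs: "bcoef a s s = (a s)^2" by (simp add: bcoef_def power2_eq_square)
  have "s \<noteq> 1" using assms(8) b0 by auto
  then obtain t where t: "s = Suc (Suc t)" using assms(3) by (metis One_nat_def Suc_le_D not_less_eq_eq le_Suc_eq Suc_pred zero_less_iff_neq_zero le_zero_eq nat.exhaust)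
  have "(\<Sum>k=0..s. bcoef a s k * N k) = (\<Sum>k=0..t. bcoef a s k * N k) + bcoef a s (s-1) * N (s-1) + bcoef a s s * N s"
    by (simp add: t)
  also have "(\<Sum>k=0..t. bcoef a s k * N k) = bcoef a s 0 * N 0 + (\<Sum>k=Suc 0..t. bcoef a s k * N k)"
    by (rule sum.atLeast_Suc_atMost) simp
  also have "(\<Sum>k=Suc 0..t. bcoef a s k * N k) = 0"
    using assms(7) by (intro sum.neutral) (auto simp: t)
  finally have E2: "ip (RKmat a s h L *v u) (RKmat a s h L *v u) = N 0 + bcoef a s (s-1) * N (s-1) + bcoef a s s * N s"
    using E b0 by simp
  define w where "w = v (s-1)"
  have Ns: "N s = h^2 * ip (L *v w) (L *v w)"
    using t by (simp add: N_def w_def vS M_def ip_def matrix_vector_mult_scaleR power2_eq_square flip: scaleR_matrix_vector_assoc)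
  define P where "P = Hopnorm H L"
  have P0: "0 \<le> P" using Hop(2)[OF assms(1)] P_def by simp
  have nn: "0 \<le> ip x x" for x unfolding ip_def by (rule spd_nonneg[OF assms(1)])
  have HL: "Hnorm H (L *v w) \<le> P * Hnorm H w" using Hop(1)[OF assms(1)] P_def by simp
  have hn: "Hnorm H x = sqrt (ip x x)" for x by (simp add: Hnorm_def ip_def)
  have "ip (L *v w) (L *v w) = (Hnorm H (L *v w))^2" using nn by (simp add: hn)
  also have "\<dots> \<le> (P * Hnorm H w)^2"
    using HL nn by (intro power_mono) (auto simp: hn)
  also have "\<dots> = P^2 * N (s-1)" using nn by (simp add: hn power_mult_distrib N_def w_def)
  finally have LL: "ip (L *v w) (L *v w) \<le> P^2 * N (s-1)" .
  have bsp: "bcoef a s s > 0" using bs assms(5) by simp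
  have "(h * P)^2 \<le> (sqrt (- bcoef a s (s - 1) / bcoef a s s))^2"
    using assms(9) P_def P0 assms(6) by (intro power_mono) auto
  also have "\<dots> = - bcoef a s (s - 1) / bcoef a s s" using bsp assms(8) by (simp add: divide_nonpos_pos)
  finally have hP: "bcoef a s s * (h^2 * P^2) \<le> - bcoef a s (s - 1)"
    using bsp by (simp add: field_simps power_mult_distrib)
  have "bcoef a s s * N s \<le> bcoef a s s * (h^2 * (P^2 * N (s-1)))"
    unfolding Ns using LL bsp by (intro mult_left_mono) auto
  also have "\<dots> = (bcoef a s s * (h^2 * P^2)) * N (s-1)" by simp
  also have "\<dots> \<le> - bcoef a s (s - 1) * N (s-1)"
    using hP nn[of "v (s-1)"] by (intro mult_right_mono) (auto simp: N_def)
  finally have "ip (RKmat a s h L *v u) (RKmat a s h L *v u) \<le> N 0" using E2 by simp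
  hence "ip (RKmat a s h L *v u) (RKmat a s h L *v u) \<le> ip u u" by (simp add: N_def v0)
  thus "Hnorm H (RKmat a s h L *v u) \<le> Hnorm H u" by (simp add: hn)
qed

end
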